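(* Let $B$ be a finite Blaschke product of degree $2^n$ and let $g$ be a generator of its group of invariants $\mathcal{G}_B$. Suppose $B=C_n\circ C_{n-1}\circ\cdots\circ C_1$ where each $C_j$ is a Blaschke product of degree $2$. Then for each $j=1,\dots,n-1$, the group of invariants of $C_j\circ\cdots\circ C_1$ is a normal subgroup of index $2$ of the group of invariants of $C_{j+1}\circ C_j\circ\cdots\circ C_1$. Moreover, if $C_1(z)=z\left(\frac{a-z}{1-\overline{a}z}\right)$ with $a\in\mathbb{D}$, then $g^{2^{n-1}}=\varphi_a$, where $\varphi_a(z)=\frac{a-z}{1-\overline{a}z}$.
   Context: A finite Blaschke product of degree $d$ is $B(z)=\gamma\prod_{j=1}^d \frac{z-a_j}{1-\overline{a_j}z}$ with $a_j\in\mathbb{D}$ and $|\gamma|=1$. For a finite Blaschke product $F$, its group of invariants is $\mathcal{G}_F=\{u:\mathbb{T}\to\mathbb{T}\ \text{continuous} : F\circ u=F\}$, a group under composition (powers $g^m$ denote $m$-fold composition); functions in $\mathcal{G}_F$ and $\varphi_a$ are regarded as maps of the unit circle $\mathbb{T}$. *)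

theory Defs
  imports Complex_Main "HOL-Algebra.Coset" "HOL-Algebra.Generated_Groups"
begin

definition unit_circle :: "complex set" where
  "unit_circle = {z. cmod z = 1}"

definition unit_disc :: "complex set" where
  "unit_disc = {z. cmod z < 1}"

definition blaschke :: "nat \<Rightarrow> (complex \<Rightarrow> complex) \<Rightarrow> bool" where
  "blaschke d B \<longleftrightarrow> (\<exists>\<gamma> (a :: nat \<Rightarrow> complex). cmod \<gamma> = 1 \<and> (\<forall>j<d. a j \<in> unit_disc) \<and>
      (\<forall>z. cmod z \<le> 1 \<longrightarrow> B z = \<gamma> * (\<Prod>j<d. (z - a j) / (1 - cnj (a j) * z))))"

(* group of invariants: continuous self-maps u of the circle with F o u = F on the circle;
   maps of T are represented canonically as functions that are the identity off T *)
definition invariants :: "(complex \<Rightarrow> complex) \<Rightarrow> (complex \<Rightarrow> complex) set" where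
  "invariants F = {u. (\<forall>z\<in>unit_circle. u z \<in> unit_circle) \<and> continuous_on unit_circle u \<and>
      (\<forall>z\<in>unit_circle. F (u z) = F z) \<and> (\<forall>z. z \<notin> unit_circle \<longrightarrow> u z = z)}"

definition inv_group :: "(complex \<Rightarrow> complex) \<Rightarrow> (complex \<Rightarrow> complex) monoid" where
  "inv_group F = \<lparr>carrier = invariants F, mult = (\<circ>), one = id\<rparr>"

definition phi :: "complex \<Rightarrow> complex \<Rightarrow> complex" where
  "phi a z = (a - z) / (1 - cnj a * z)"

primrec chain :: "(nat \<Rightarrow> complex \<Rightarrow> complex) \<Rightarrow> nat \<Rightarrow> complex \<Rightarrow> complex" where
  "chain C 0 = id"
| "chain C (Suc j) = C (Suc j) \<circ> chain C j"

end

theory Submission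
  imports Defs "HOL-Analysis.Analysis"
begin

lemma cis_eq_int:
  assumes "cis a = cis b" shows "\<exists>n::int. a = b + 2 * pi * n"
proof -
  have "cos a = cos b" "sin a = sin b" 
    using arg_cong[of _ _ Re, OF assms] arg_cong[of _ _ Im, OF assms] by simp_all
  thus ?thesis using sin_cos_eq_iff[of a b] by simp
qed

lemma cis_int_shift: "cis (x + 2 * pi * of_int n) = cis x"
proof -
  have "cis (x + 2 * pi * of_int n) = cis x * cis (2 * pi * of_int n)" by (simp only: cis_mult)
  moreover have "cis (2 * pi * of_int n) = 1" by (rule cis_multiple_2pi) simp
  ultimately show ?thesis by simp
qed

lemma circle_cis: "z \<in> unit_circle \<Longrightarrow> cis (Arg z) = z"
proof -
  assume "z \<in> unit_circle"
  hence "norm z = 1" by (simp add: unit_circle_def)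
  hence "z \<noteq> 0" by auto
  hence "cis (Arg z) = sgn z" by (rule cis_Arg)
  also have "sgn z = z" using \<open>norm z = 1\<close> by (simp add: sgn_eq)
  finally show ?thesis .
qed

lemma cis_in_circle[simp]: "cis t \<in> unit_circle"
  unfolding unit_circle_def by simp

lemma shift_nat:
  assumes "\<And>t. f (t + 2*pi) = f t + 2*pi*e"
  shows "f (t + 2*pi*real m) = f t + 2*pi*e*real m"
proof (induction m)
  case (Suc m)
  have "t + 2*pi*real (Suc m) = (t + 2*pi*real m) + 2*pi" by (simp add: distrib_left)
  hence "f (t + 2*pi*real (Suc m)) = f ((t + 2*pi*real m) + 2*pi)" by (simp only:)
  also have "\<dots> = f (t + 2*pi*real m) + 2*pi*e" by (rule assms)
  also have "\<dots> = f t + 2*pi*e*real (Suc m)" unfolding Suc by (simp add: distrib_left)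
  finally show ?case .
qed simp

lemma shift_int:
  assumes "\<And>t. f (t + 2*pi) = f t + 2*pi*e"
  shows "f (t + 2*pi*real_of_int m) = f t + 2*pi*e*real_of_int m"
proof (cases "m \<ge> 0")
  case True
  then obtain k where "m = int k" using nonneg_int_cases by blast
  thus ?thesis using shift_nat[where f=f and e=e, OF assms, of t k] by simp
next
  case False
  define k where "k = nat (- m)"
  have k: "m = - int k" using False k_def by simp
  have "f ((t + 2*pi*real_of_int m) + 2*pi*real k) = f (t + 2*pi*real_of_int m) + 2*pi*e*real k"
    by (rule shift_nat[where f=f and e=e, OF assms])
  moreover have "(t + 2*pi*real_of_int m) + 2*pi*real k = t" using k by simp
  ultimately show ?thesis using k by (simp add: algebra_simps)
qed

lemma circ_cont:
  assumes h: "continuous_on UNIV h" and V: "\<And>t. V (cis t) = cis (h t)"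
  shows "continuous_on unit_circle V"
proof -
  have "continuous (at z0 within unit_circle) V" if z0: "z0 \<in> unit_circle" for z0
  proof -
    define t0 where "t0 = Arg z0"
    have z0c: "z0 = cis t0" using z0 circle_cis t0_def by simp
    have nz: "z0 \<noteq> 0" using z0c by simp
    have eq: "V z = cis (h (t0 + Arg (z / z0)))" if "z \<in> unit_circle" for z
    proof -
      have "z / z0 \<in> unit_circle" using that z0 unfolding unit_circle_def by (simp add: norm_divide)
      hence "cis (Arg (z/z0)) = z / z0" by (rule circle_cis)
      hence "cis t0 * cis (Arg (z / z0)) = z" using z0c nz by simp
      hence "cis (t0 + Arg (z / z0)) = z" by (simp add: cis_mult)
      thus ?thesis using V by metis
    qed
    have c1: "continuous (at z0) (\<lambda>z. z / z0)" using nz by (intro continuous_intros) 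
    have "z0 / z0 = 1" using nz by simp
    have c2: "continuous (at (z0/z0)) Arg" unfolding \<open>z0/z0 = 1\<close>
      by (rule continuous_at_Arg) simp
    have c3: "continuous (at z0) (\<lambda>z. Arg (z / z0))"
      using continuous_at_compose[OF c1 c2] by (simp add: o_def)
    have c3': "continuous (at z0) (\<lambda>z. t0 + Arg (z / z0))"
      using c3 by (intro continuous_intros)
    have hc: "continuous (at (t0 + Arg (z0 / z0))) h" using h by (simp add: continuous_on_eq_continuous_at)
    have c4: "continuous (at z0) (\<lambda>z. h (t0 + Arg (z / z0)))"
      using continuous_at_compose[OF c3' hc] by (simp add: o_def)
    have c5: "continuous (at z0) (\<lambda>z. cis (h (t0 + Arg (z / z0))))"
      using c4 unfolding continuous_at by (intro tendsto_intros) simp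
    have "continuous (at z0 within unit_circle) (\<lambda>z. cis (h (t0 + Arg (z / z0))))"
      using c5 continuous_at_imp_continuous_within by blast
    thus ?thesis
      by (rule continuous_transform_within[where \<delta>=1]) (use eq z0 in auto)
  qed
  thus ?thesis using continuous_on_eq_continuous_within by blast
qed

definition lift_ok :: "nat \<Rightarrow> (complex \<Rightarrow> complex) \<Rightarrow> (real \<Rightarrow> real) \<Rightarrow> bool" where
  "lift_ok d F \<theta> \<longleftrightarrow> continuous_on UNIV \<theta> \<and> strict_mono \<theta> \<and>
     (\<forall>t. \<theta> (t + 2*pi) = \<theta> t + 2*pi*real d) \<and> (\<forall>t. F (cis t) = cis (\<theta> t))"

definition Uk :: "(real \<Rightarrow> real) \<Rightarrow> int \<Rightarrow> complex \<Rightarrow> complex" where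
  "Uk \<theta> k z = (if z \<in> unit_circle then cis (inv_into UNIV \<theta> (\<theta> (Arg z) + 2*pi* of_int k)) else z)"

locale liftloc =
  fixes d :: nat and F :: "complex \<Rightarrow> complex" and \<theta> :: "real \<Rightarrow> real"
  assumes L: "lift_ok d F \<theta>"
begin

lemma cont: "continuous_on UNIV \<theta>" and mono: "strict_mono \<theta>"
  and per: "\<And>t. \<theta> (t + 2*pi) = \<theta> t + 2*pi*real d" and Fcis: "\<And>t. F (cis t) = cis (\<theta> t)"
  using L unfolding lift_ok_def by auto

lemma per_int: "\<theta> (t + 2*pi* of_int m) = \<theta> t + 2*pi*real d* of_int m"
  by (rule shift_int[where f=\<theta>, OF per])

lemma d_pos: "d \<ge> 1"
proof -
  have "\<theta> 0 < \<theta> (0 + 2*pi)" using mono by (simp add: strict_mono_less)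
  hence "0 < real d" using per[of 0] by (simp add: zero_less_mult_iff)
  thus ?thesis by simp
qed

lemma surj: "surj \<theta>"
proof -
  have "\<exists>x. \<theta> x = y" for y
  proof -
    define m where "m = \<lceil>\<bar>y - \<theta> 0\<bar>\<rceil>"
    have m0: "(0::real) \<le> of_int m" unfolding m_def by simp
    have my: "\<bar>y - \<theta> 0\<bar> \<le> of_int m" unfolding m_def by simp
    have "1 \<le> 2*pi*real d" using d_pos pi_gt3 by (simp add: mult_ge1_I)
    hence big: "of_int m \<le> 2*pi*real d* of_int m" using mult_right_mono[OF _ m0, of 1 "2*pi*real d"] by simp
    have a: "\<theta> (0 + 2*pi* of_int (-m)) \<le> y" using per_int[of 0 "-m"] big my by simp
    have b: "y \<le> \<theta> (0 + 2*pi* of_int m)" using per_int[of 0 m] big my by simp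
    have "0 + 2*pi* of_int (-m) \<le> 0 + 2*pi* of_int m" using m0 by simp
    from IVT'[OF a b this] cont show ?thesis by (meson continuous_on_subset top_greatest)
  qed
  thus ?thesis by (metis surjI)
qed

lemma inj: "inj \<theta>" using mono by (rule strict_mono_imp_inj_on)

abbreviation \<psi> where "\<psi> \<equiv> inv_into UNIV \<theta>"

lemma psi_theta[simp]: "\<psi> (\<theta> t) = t" using inj by (simp add: inv_f_f)
lemma theta_psi[simp]: "\<theta> (\<psi> y) = y" using surj by (simp add: surj_f_inv_f)

lemma psi_less: "x < y \<Longrightarrow> \<psi> x < \<psi> y"
  by (metis mono strict_mono_less_eq theta_psi not_le)

lemma psi_shift: "\<psi> (y + 2*pi*real d* of_int m) = \<psi> y + 2*pi* of_int m"
proof -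
  have "\<theta> (\<psi> y + 2*pi* of_int m) = y + 2*pi*real d* of_int m" using per_int[of "\<psi> y" m] by simp
  hence "\<psi> (y + 2*pi*real d* of_int m) = \<psi> (\<theta> (\<psi> y + 2*pi* of_int m))" by simp
  thus ?thesis by simp
qed

lemma psi_cont: "continuous_on UNIV \<psi>"
proof -
  have "isCont \<psi> y" for y
  proof -
    have "isCont \<psi> (\<theta> (\<psi> y))"
      by (rule isCont_inverse_function[where d=1]) (use cont in \<open>auto simp: continuous_on_eq_continuous_at\<close>)
    thus ?thesis by simp
  qed
  thus ?thesis by (simp add: continuous_on_eq_continuous_at)
qed

lemma Arg_cis_int: "\<exists>n::int. Arg (cis t) = t + 2*pi* of_int n"
  using cis_eq_int[OF circle_cis[OF cis_in_circle[of t]]] .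

lemma U_cis: "Uk \<theta> k (cis t) = cis (\<psi> (\<theta> t + 2*pi* of_int k))"
proof -
  obtain n where n: "Arg (cis t) = t + 2*pi* of_int n" using Arg_cis_int by blast
  have eq: "\<theta> (Arg (cis t)) + 2*pi* of_int k = (\<theta> t + 2*pi* of_int k) + 2*pi*real d* of_int n"
    using per_int[of t n] n by simp
  have "\<psi> (\<theta> (Arg (cis t)) + 2*pi* of_int k) = \<psi> (\<theta> t + 2*pi* of_int k) + 2*pi* of_int n"
    unfolding eq by (rule psi_shift)
  thus ?thesis unfolding Uk_def by (simp add: cis_int_shift)
qed

lemma circle_eq: "z \<in> unit_circle \<Longrightarrow> \<exists>t. z = cis t"
  using circle_cis by metis

lemma U_in: "Uk \<theta> k \<in> invariants F"
proof -
  have c1: "continuous_on UNIV (\<lambda>t. \<theta> t + 2*pi* of_int k)" using cont by (intro continuous_intros)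
  have c2: "continuous_on UNIV (\<lambda>t. \<psi> (\<theta> t + 2*pi* of_int k))"
    using continuous_on_compose[OF c1 continuous_on_subset[OF psi_cont]] by (simp add: o_def)
  have "continuous_on unit_circle (Uk \<theta> k)"
    by (rule circ_cont[OF c2]) (rule U_cis)
  moreover have "F (Uk \<theta> k z) = F z" if zc: "z \<in> unit_circle" for z
  proof -
    obtain t where t: "z = cis t" using circle_eq[OF zc] by blast
    have "F (Uk \<theta> k z) = cis (\<theta> t + 2*pi* of_int k)" unfolding t U_cis Fcis by simp
    also have "\<dots> = F z" unfolding t Fcis by (rule cis_int_shift)
    finally show ?thesis .
  qed
  ultimately show ?thesis unfolding invariants_def by (auto simp: Uk_def)
qed

lemma U_add: "Uk \<theta> k \<circ> Uk \<theta> m = Uk \<theta> (k + m)"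
proof
  fix z
  show "(Uk \<theta> k \<circ> Uk \<theta> m) z = Uk \<theta> (k + m) z"
  proof (cases "z \<in> unit_circle")
    case True
    then obtain t where t: "z = cis t" using circle_eq by blast
    show ?thesis unfolding t o_def U_cis by (simp add: algebra_simps)
  next
    case False
    thus ?thesis by (simp add: Uk_def)
  qed
qed

lemma U_0: "Uk \<theta> 0 = id"
proof
  fix z
  show "Uk \<theta> 0 z = id z"
  proof (cases "z \<in> unit_circle")
    case True
    then obtain t where t: "z = cis t" using circle_eq by blast
    show ?thesis unfolding t U_cis by simp
  next
    case False
    thus ?thesis by (simp add: Uk_def)
  qed
qed

lemma U_period: "Uk \<theta> (k + int d * q) = Uk \<theta> k"
proof
  fix z
  show "Uk \<theta> (k + int d * q) z = Uk \<theta> k z"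
  proof (cases "z \<in> unit_circle")
    case True
    then obtain t where t: "z = cis t" using circle_eq by blast
    have "\<psi> (\<theta> t + 2*pi* of_int (k + int d * q)) = \<psi> ((\<theta> t + 2*pi* of_int k) + 2*pi*real d * of_int q)"
      by (simp add: algebra_simps)
    also have "\<dots> = \<psi> (\<theta> t + 2*pi* of_int k) + 2*pi* of_int q" by (rule psi_shift)
    finally show ?thesis unfolding t U_cis by (simp add: cis_int_shift)
  next
    case False
    thus ?thesis by (simp add: Uk_def)
  qed
qed

lemma U_mod: "Uk \<theta> (k mod int d) = Uk \<theta> k"
  using U_period[of "k mod int d" "k div int d"] by simp

lemma U_id: assumes "Uk \<theta> j = id" shows "int d dvd j"
proof -
  define j' where "j' = j mod int d"
  have j'0: "0 \<le> j'" "j' < int d" using d_pos unfolding j'_def by auto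
  have "Uk \<theta> j' = id" using U_mod assms j'_def by simp
  hence "cis (\<psi> (\<theta> 0 + 2*pi* of_int j')) = cis 0" using U_cis[of j' 0] by (metis cis_zero id_apply)
  then obtain n :: int where n: "\<psi> (\<theta> 0 + 2*pi* of_int j') = 0 + 2*pi* of_int n" using cis_eq_int by blast
  have lo: "0 \<le> \<psi> (\<theta> 0 + 2*pi* of_int j')"
  proof -
    have "\<psi> (\<theta> 0) \<le> \<psi> (\<theta> 0 + 2*pi* of_int j')" using psi_less[of "\<theta> 0" "\<theta> 0 + 2*pi* of_int j'"] j'0
      by (cases "j' = 0") auto
    thus ?thesis by simp
  qed
  have hi: "\<psi> (\<theta> 0 + 2*pi* of_int j') < 2*pi"
  proof -
    have "\<psi> (\<theta> 0 + 2*pi* of_int j') < \<psi> (\<theta> 0 + 2*pi*real d* of_int 1)"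
      by (rule psi_less) (use j'0 in simp)
    also have "\<dots> = 2*pi" using psi_shift[of "\<theta> 0" 1] by simp
    finally show ?thesis .
  qed
  have "n = 0"
  proof -
    have p1: "0 \<le> pi * of_int n" "pi * of_int n < pi * 1" using lo hi n by auto
    have "0 \<le> (of_int n::real)" using p1(1) pi_gt_zero by (simp add: zero_le_mult_iff)
    moreover have "of_int n < (1::real)" using p1(2) pi_gt_zero mult_less_cancel_left_pos by blast
    ultimately show ?thesis by linarith
  qed
  hence "\<psi> (\<theta> 0 + 2*pi* of_int j') = \<psi> (\<theta> 0)" using n by simp
  hence "\<theta> 0 + 2*pi* of_int j' = \<theta> 0" by (metis theta_psi)
  hence "j' = 0" by simp
  thus ?thesis unfolding j'_def by auto
qed

lemma U_eq_iff: "Uk \<theta> k = Uk \<theta> m \<longleftrightarrow> int d dvd (k - m)"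
proof
  assume "Uk \<theta> k = Uk \<theta> m"
  hence "Uk \<theta> (-m) \<circ> Uk \<theta> k = Uk \<theta> (-m) \<circ> Uk \<theta> m" by simp
  hence "Uk \<theta> (k - m) = id" unfolding U_add U_0[symmetric] by simp
  thus "int d dvd (k - m)" by (rule U_id)
next
  assume "int d dvd (k - m)"
  then obtain q where "k = m + int d * q" by (metis add_diff_cancel_left' add_diff_eq dvdE)
  thus "Uk \<theta> k = Uk \<theta> m" using U_period by simp
qed

lemma U_complete:
  assumes u: "u \<in> invariants F"
  shows "\<exists>k. u = Uk \<theta> k"
proof -
  have ucirc: "\<And>z. z \<in> unit_circle \<Longrightarrow> u z \<in> unit_circle"
    and ucont: "continuous_on unit_circle u"
    and uF: "\<And>z. z \<in> unit_circle \<Longrightarrow> F (u z) = F z"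
    and uoff: "\<And>z. z \<notin> unit_circle \<Longrightarrow> u z = z"
    using u unfolding invariants_def by auto
  define f where "f t = u (cis t)" for t
  have fc: "continuous_on UNIV f" unfolding f_def
    by (rule continuous_on_compose2[OF ucont]) (auto intro: continuous_intros)
  have fnz: "f t \<noteq> 0" for t using ucirc[OF cis_in_circle[of t]] unfolding f_def unit_circle_def by auto
  obtain g where gc: "continuous_on UNIV g" and fg: "\<And>x. f x = exp (g x)"
    using continuous_logarithm_on_contractible[OF fc contractible_UNIV, of thesis] fnz by blast
  define \<phi> where "\<phi> t = Im (g t)" for t
  have \<phi>c: "continuous_on UNIV \<phi>" unfolding \<phi>_def using gc by (intro continuous_intros)
  have fphi: "f t = cis (\<phi> t)" for t
  proof -
    have "norm (f t) = 1" using ucirc[OF cis_in_circle[of t]] unfolding f_def unit_circle_def by auto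
    hence "exp (Re (g t)) = 1" using fg[of t] by (simp add: norm_exp_eq_Re)
    hence "Re (g t) = 0" by simp
    thus ?thesis using fg[of t] unfolding \<phi>_def by (simp add: exp_eq_polar)
  qed
  define D where "D t = (\<theta> (\<phi> t) - \<theta> t) / (2*pi)" for t
  have DZ: "D t \<in> \<int>" for t
  proof -
    have "F (u (cis t)) = F (cis t)" by (rule uF[OF cis_in_circle])
    hence "cis (\<theta> (\<phi> t)) = cis (\<theta> t)" using fphi[of t] unfolding f_def by (simp add: Fcis)
    then obtain n :: int where "\<theta> (\<phi> t) = \<theta> t + 2*pi* of_int n" using cis_eq_int by blast
    hence "D t = of_int n" unfolding D_def by simp
    thus ?thesis by simp
  qed
  have Dc: "continuous_on UNIV D" unfolding D_def
    using continuous_on_compose[OF \<phi>c continuous_on_subset[OF cont]] cont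
    by (intro continuous_intros) (auto simp: o_def)
  have "D constant_on UNIV"
  proof (rule continuous_discrete_range_constant[OF connected_UNIV Dc])
    fix x :: real
    show "\<exists>e>0. \<forall>y. y \<in> UNIV \<and> D y \<noteq> D x \<longrightarrow> e \<le> norm (D y - D x)"
    proof (intro exI[of _ 1] conjI allI impI)
      fix y assume "y \<in> UNIV \<and> D y \<noteq> D x"
      moreover obtain a where a: "D y = of_int a" using DZ[of y] Ints_cases by blast
      moreover obtain b where b: "D x = of_int b" using DZ[of x] Ints_cases by blast
      ultimately have "a \<noteq> b" by auto
      hence "1 \<le> \<bar>a - b\<bar>" by linarith
      hence "(1::real) \<le> \<bar>of_int a - of_int b\<bar>" by (metis of_int_1_le_iff of_int_abs of_int_diff)
      thus "1 \<le> norm (D y - D x)" using a b by simp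
    qed simp
  qed
  then obtain c where c: "\<And>t. D t = c" unfolding constant_on_def by blast
  obtain k where k: "c = of_int k" using DZ[of 0] c Ints_cases by metis
  have phi_eq: "\<phi> t = \<psi> (\<theta> t + 2*pi* of_int k)" for t
  proof -
    have "\<theta> (\<phi> t) = \<theta> t + 2*pi* of_int k" using c[of t] k unfolding D_def by (simp add: field_simps)
    hence "\<psi> (\<theta> (\<phi> t)) = \<psi> (\<theta> t + 2*pi* of_int k)" by simp
    thus ?thesis by simp
  qed
  have "u = Uk \<theta> k"
  proof
    fix z
    show "u z = Uk \<theta> k z"
    proof (cases "z \<in> unit_circle")
      case True
      then obtain t where t: "z = cis t" using circle_eq by blast
      show ?thesis using fphi[of t] phi_eq[of t] unfolding t U_cis f_def by simp
    next
      case False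
      thus ?thesis using uoff by (simp add: Uk_def)
    qed
  qed
  thus ?thesis by blast
qed

lemma inv_range: "invariants F = range (Uk \<theta>)"
  using U_complete U_in by blast

lemma inv_fin: "invariants F = Uk \<theta> ` {0..<int d}"
proof -
  have "Uk \<theta> k \<in> Uk \<theta> ` {0..<int d}" for k
  proof -
    have "k mod int d \<in> {0..<int d}" using d_pos by auto
    thus ?thesis using U_mod[of k] by (metis image_eqI)
  qed
  thus ?thesis using inv_range by auto
qed

lemma card_inv: "card (invariants F) = d"
proof -
  have "inj_on (Uk \<theta>) {0..<int d}"
  proof
    fix a b assume ab: "a \<in> {0..<int d}" "b \<in> {0..<int d}" "Uk \<theta> a = Uk \<theta> b"
    hence "int d dvd (a - b)" using U_eq_iff by blast
    hence "a mod int d = b mod int d" by (simp add: mod_eq_dvd_iff)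
    thus "a = b" using ab by simp
  qed
  thus ?thesis unfolding inv_fin by (simp add: card_image)
qed

lemma fin_inv: "finite (invariants F)"
  unfolding inv_fin by simp

lemma grp: "comm_group (inv_group F)"
proof (rule comm_groupI)
  show "\<one>\<^bsub>inv_group F\<^esub> \<in> carrier (inv_group F)"
    unfolding inv_group_def using U_in[of 0] U_0 by simp
next
  fix x y assume "x \<in> carrier (inv_group F)" "y \<in> carrier (inv_group F)"
  then obtain k m where "x = Uk \<theta> k" "y = Uk \<theta> m" unfolding inv_group_def inv_range by auto
  thus "x \<otimes>\<^bsub>inv_group F\<^esub> y \<in> carrier (inv_group F)"
    and "x \<otimes>\<^bsub>inv_group F\<^esub> y = y \<otimes>\<^bsub>inv_group F\<^esub> x"
    unfolding inv_group_def by (simp_all add: U_add inv_range add.commute)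
next
  fix x y z assume "x \<in> carrier (inv_group F)" "y \<in> carrier (inv_group F)" "z \<in> carrier (inv_group F)"
  thus "x \<otimes>\<^bsub>inv_group F\<^esub> y \<otimes>\<^bsub>inv_group F\<^esub> z = x \<otimes>\<^bsub>inv_group F\<^esub> (y \<otimes>\<^bsub>inv_group F\<^esub> z)"
    unfolding inv_group_def by (simp add: o_assoc)
next
  fix x assume "x \<in> carrier (inv_group F)"
  thus "\<one>\<^bsub>inv_group F\<^esub> \<otimes>\<^bsub>inv_group F\<^esub> x = x" unfolding inv_group_def by simp
next
  fix x assume "x \<in> carrier (inv_group F)"
  then obtain k where x: "x = Uk \<theta> k" unfolding inv_group_def inv_range by auto
  have "Uk \<theta> (-k) \<circ> Uk \<theta> k = id" by (simp add: U_add U_0)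
  thus "\<exists>y\<in>carrier (inv_group F). y \<otimes>\<^bsub>inv_group F\<^esub> x = \<one>\<^bsub>inv_group F\<^esub>"
    unfolding inv_group_def x inv_range by auto
qed

end

lemma lift_cong:
  assumes "lift_ok d F \<theta>" "\<And>t. G (cis t) = F (cis t)"
  shows "lift_ok d G \<theta>"
  using assms unfolding lift_ok_def by auto

lemma lift_comp:
  assumes "lift_ok d F \<theta>" "lift_ok e G \<eta>"
  shows "lift_ok (d * e) (G \<circ> F) (\<eta> \<circ> \<theta>)"
proof -
  have pe: "\<And>t. \<eta> (t + 2*pi) = \<eta> t + 2*pi*real e" using assms(2) unfolding lift_ok_def by auto
  have "continuous_on UNIV (\<eta> \<circ> \<theta>)"
    using assms unfolding lift_ok_def by (metis continuous_on_compose continuous_on_subset top_greatest)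
  moreover have "strict_mono (\<eta> \<circ> \<theta>)"
    using assms unfolding lift_ok_def strict_mono_def by simp
  moreover have "(\<eta> \<circ> \<theta>) (t + 2*pi) = (\<eta> \<circ> \<theta>) t + 2*pi*real (d*e)" for t
  proof -
    have "\<theta> (t + 2*pi) = \<theta> t + 2*pi*real d" using assms(1) unfolding lift_ok_def by auto
    hence "(\<eta> \<circ> \<theta>) (t + 2*pi) = \<eta> (\<theta> t + 2*pi*real d)" by simp
    also have "\<dots> = \<eta> (\<theta> t) + 2*pi*real e*real d" by (rule shift_nat[where f=\<eta>, OF pe])
    finally show ?thesis by simp
  qed
  moreover have "(G \<circ> F) (cis t) = cis ((\<eta> \<circ> \<theta>) t)" for t
    using assms unfolding lift_ok_def by simp
  ultimately show ?thesis unfolding lift_ok_def by blast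
qed

lemma lift_mult:
  assumes "lift_ok d1 F1 \<theta>1" "lift_ok d2 F2 \<theta>2"
  shows "lift_ok (d1 + d2) (\<lambda>z. F1 z * F2 z) (\<lambda>t. \<theta>1 t + \<theta>2 t)"
  using assms unfolding lift_ok_def strict_mono_def
  by (auto intro!: continuous_intros add_strict_mono simp: cis_mult algebra_simps)

lemma lift_scale:
  assumes "cmod \<gamma> = 1" "lift_ok d F \<theta>"
  shows "lift_ok d (\<lambda>z. \<gamma> * F z) (\<lambda>t. \<theta> t + Arg \<gamma>)"
proof -
  have g: "\<gamma> = cis (Arg \<gamma>)" using circle_cis[of \<gamma>] assms(1) unfolding unit_circle_def by simp
  show ?thesis using assms(2) unfolding lift_ok_def strict_mono_def
    by (auto intro!: continuous_intros simp: cis_mult algebra_simps) (metis g cis_mult add.commute)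
qed

lemma mobius_nz:
  assumes a: "cmod a < 1" and x: "cmod x = 1"
  shows "1 - cnj a * x \<noteq> 0"
proof
  assume "1 - cnj a * x = 0"
  hence "cnj a * x = 1" by simp
  hence "cmod (cnj a * x) = 1" by simp
  hence "cmod a = 1" using x by (simp add: norm_mult)
  thus False using a by simp
qed

lemma mobius_inj:
  assumes a: "cmod a < 1" and z: "cmod z = 1" and w: "cmod w = 1"
    and eq: "(z - a) / (1 - cnj a * z) = (w - a) / (1 - cnj a * w)"
  shows "z = w"
proof -
  have "(z - a) * (1 - cnj a * w) = (w - a) * (1 - cnj a * z)"
    using eq frac_eq_eq[OF mobius_nz[OF a z] mobius_nz[OF a w]] by simp
  moreover have "(z - w) * (1 - a * cnj a) = (z - a) * (1 - cnj a * w) - (w - a) * (1 - cnj a * z)"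
    by (simp add: algebra_simps)
  ultimately have "(z - w) * (1 - a * cnj a) = 0" by simp
  moreover have "a * cnj a \<noteq> 1"
  proof
    assume "a * cnj a = 1"
    hence "(complex_of_real (cmod a))^2 = 1" using complex_norm_square[of a] by simp
    hence "cmod a ^ 2 = 1" by (metis of_real_eq_1_iff of_real_power)
    moreover have "cmod a ^ 2 < 1 ^ 2" by (rule power_strict_mono) (use a in auto)
    ultimately show False by simp
  qed
  ultimately show ?thesis by simp
qed

lemma lift_mobius:
  assumes a: "a \<in> unit_disc"
  shows "lift_ok 1 (\<lambda>z. (z - a) / (1 - cnj a * z)) (\<lambda>t. t + 2 * Arg (1 - a * cis (- t)))"
proof -
  have a1: "cmod a < 1" using a unfolding unit_disc_def by simp
  define w where "w t = 1 - a * cis (- t)" for t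
  define \<theta> where "\<theta> t = t + 2 * Arg (w t)" for t
  have Rew: "0 < Re (w t)" for t
  proof -
    have "Re (a * cis (-t)) \<le> cmod (a * cis (-t))" by (rule complex_Re_le_cmod)
    also have "\<dots> < 1" using a1 by (simp add: norm_mult)
    finally show ?thesis unfolding w_def by simp
  qed
  have wnz: "w t \<noteq> 0" for t using Rew[of t] by auto
  have cont: "continuous_on UNIV \<theta>"
  proof -
    have "isCont \<theta> t" for t
    proof -
      have "w t \<notin> \<real>\<^sub>\<le>\<^sub>0" using Rew[of t] by (auto simp: complex_nonpos_Reals_iff)
      hence c2: "isCont Arg (w t)" by (rule continuous_at_Arg)
      have "continuous_on UNIV w" unfolding w_def by (intro continuous_intros)
      hence c1: "isCont w t" by (simp add: continuous_on_eq_continuous_at)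
      have "isCont (\<lambda>t. Arg (w t)) t" using continuous_at_compose[OF c1 c2] by (simp add: o_def)
      thus ?thesis unfolding \<theta>_def by (intro continuous_intros)
    qed
    thus ?thesis by (simp add: continuous_on_eq_continuous_at)
  qed
  have val: "(cis t - a) / (1 - cnj a * cis t) = cis (\<theta> t)" for t
  proof -
    have ws: "w t = of_real (cmod (w t)) * cis (Arg (w t))"
      using cis_Arg[OF wnz[of t]] wnz[of t] by (simp add: sgn_eq)
    have cw: "cnj (w t) = of_real (cmod (w t)) * cis (- Arg (w t))"
      by (subst ws) (simp add: cis_cnj)
    have num: "cis t - a = cis t * w t" unfolding w_def by (simp add: algebra_simps cis_mult)
    have den: "1 - cnj a * cis t = cnj (w t)" unfolding w_def by (simp add: cis_cnj)
    have "(cis t - a) / (1 - cnj a * cis t) = cis t * (cis (Arg (w t)) / cis (- Arg (w t)))"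
      unfolding num den using wnz[of t] by (subst (1) ws, subst cw) (simp add: field_simps)
    also have "\<dots> = cis (\<theta> t)" unfolding \<theta>_def by (simp add: cis_divide cis_mult)
    finally show ?thesis .
  qed
  have per: "\<theta> (t + 2*pi) = \<theta> t + 2*pi*real 1" for t
  proof -
    have "cis (- (t + 2*pi)) = cis (-t)" using cis_int_shift[of "-t" "-1"] by simp
    hence "w (t + 2*pi) = w t" unfolding w_def by simp
    thus ?thesis unfolding \<theta>_def by simp
  qed
  have inj: "inj \<theta>"
  proof
    fix s t assume st: "\<theta> s = \<theta> t"
    hence "(cis s - a) / (1 - cnj a * cis s) = (cis t - a) / (1 - cnj a * cis t)" using val by simp
    hence "cis s = cis t" using mobius_inj[OF a1] by simp
    then obtain n :: int where n: "s = t + 2*pi* of_int n" using cis_eq_int by blast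
    have "\<theta> s = \<theta> t + 2*pi*1* of_int n" unfolding n by (rule shift_int[where f=\<theta>]) (use per in simp)
    hence "n = 0" using st by simp
    thus "s = t" using n by simp
  qed
  have "strict_mono_on UNIV \<theta> \<or> strict_antimono_on UNIV \<theta>"
    using injective_eq_monotone_map[of UNIV \<theta>] cont inj by simp
  moreover have "\<not> strict_antimono_on UNIV \<theta>"
  proof
    assume "strict_antimono_on UNIV \<theta>"
    hence "\<theta> (0 + 2*pi) < \<theta> 0" by (simp add: monotone_on_def)
    thus False using per[of 0] by simp
  qed
  ultimately have "strict_mono \<theta>" by simp
  thus ?thesis unfolding lift_ok_def using cont per val \<theta>_def[abs_def] w_def[abs_def] by simp
qed

lemma lift_blaschke2:
  assumes "blaschke 2 F" shows "\<exists>\<theta>. lift_ok 2 F \<theta>"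
proof -
  obtain \<gamma> and a :: "nat \<Rightarrow> complex" where g: "cmod \<gamma> = 1" and a: "\<forall>j<(2::nat). a j \<in> unit_disc"
    and F: "\<forall>z. cmod z \<le> 1 \<longrightarrow> F z = \<gamma> * (\<Prod>j<(2::nat). (z - a j) / (1 - cnj (a j) * z))"
    using assms unfolding blaschke_def by blast
  have a0: "a 0 \<in> unit_disc" and a1: "a 1 \<in> unit_disc" using a by auto
  obtain \<theta>0 where L0: "lift_ok 1 (\<lambda>z. (z - a 0) / (1 - cnj (a 0) * z)) \<theta>0"
    using lift_mobius[OF a0] by blast
  obtain \<theta>1 where L1: "lift_ok 1 (\<lambda>z. (z - a 1) / (1 - cnj (a 1) * z)) \<theta>1"
    using lift_mobius[OF a1] by blast
  have "lift_ok (1+1) (\<lambda>z. ((z - a 0) / (1 - cnj (a 0) * z)) * ((z - a 1) / (1 - cnj (a 1) * z))) (\<lambda>t. \<theta>0 t + \<theta>1 t)"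
    by (rule lift_mult[OF L0 L1])
  hence "lift_ok (1+1) (\<lambda>z. \<gamma> * (((z - a 0) / (1 - cnj (a 0) * z)) * ((z - a 1) / (1 - cnj (a 1) * z)))) (\<lambda>t. (\<theta>0 t + \<theta>1 t) + Arg \<gamma>)"
    by (rule lift_scale[OF g])
  hence "lift_ok 2 (\<lambda>z. \<gamma> * (((z - a 0) / (1 - cnj (a 0) * z)) * ((z - a 1) / (1 - cnj (a 1) * z)))) (\<lambda>t. (\<theta>0 t + \<theta>1 t) + Arg \<gamma>)"
    by (simp only: one_add_one)
  moreover have "F (cis t) = \<gamma> * (((cis t - a 0) / (1 - cnj (a 0) * cis t)) * ((cis t - a 1) / (1 - cnj (a 1) * cis t)))" for t
    using F[rule_format, of "cis t"] by (simp add: numeral_2_eq_2)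
  ultimately show ?thesis using lift_cong by blast
qed

lemma lift_chain:
  assumes C: "\<forall>j\<in>{1..n}. blaschke 2 (C j)"
  shows "1 \<le> j \<Longrightarrow> j \<le> n \<Longrightarrow> \<exists>\<theta>. lift_ok (2^j) (chain C j) \<theta>"
proof (induction j)
  case 0 thus ?case by simp
next
  case (Suc j)
  have "Suc j \<in> {1..n}" using Suc.prems by simp
  hence "blaschke 2 (C (Suc j))" using C by blast
  then obtain \<eta> where e: "lift_ok 2 (C (Suc j)) \<eta>" using lift_blaschke2 by blast
  show ?case
  proof (cases "j = 0")
    case True
    thus ?thesis using e by (intro exI[of _ \<eta>]) simp
  next
    case False
    then obtain \<theta> where t: "lift_ok (2^j) (chain C j) \<theta>" using Suc by auto
    have "lift_ok (2^j * 2) (C (Suc j) \<circ> chain C j) (\<eta> \<circ> \<theta>)" by (rule lift_comp[OF t e])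
    hence "lift_ok (2^(Suc j)) (chain C (Suc j)) (\<eta> \<circ> \<theta>)" by (simp add: mult.commute)
    thus ?thesis by blast
  qed
qed

lemma pow_funpow: "x [^]\<^bsub>inv_group F\<^esub> (n::nat) = x ^^ n"
  by (induction n) (simp_all add: inv_group_def funpow_Suc_right del: funpow.simps(2))

lemma (in liftloc) U_funpow: "Uk \<theta> k ^^ n = Uk \<theta> (k * int n)"
  by (induction n) (simp_all add: U_0 funpow_Suc_right U_add algebra_simps del: funpow.simps(2))

lemma (in liftloc) U_inv: "inv\<^bsub>inv_group F\<^esub> (Uk \<theta> k) = Uk \<theta> (-k)"
proof -
  interpret G: comm_group "inv_group F" by (rule grp)
  show ?thesis
    by (rule G.inv_equality) (simp_all add: inv_group_def U_add U_0 U_in)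
qed

lemma (in liftloc) U_int_pow: "Uk \<theta> k [^]\<^bsub>inv_group F\<^esub> (z::int) = Uk \<theta> (k * z)"
proof (cases "z < 0")
  case True
  thus ?thesis by (simp add: int_pow_def2 pow_funpow U_funpow U_inv)
next
  case False
  thus ?thesis by (simp add: int_pow_def2 pow_funpow U_funpow)
qed

lemma chain_C1: "1 \<le> j \<Longrightarrow> C 1 x = C 1 y \<Longrightarrow> chain C j x = chain C j y"
proof (induction j)
  case 0 thus ?case by simp
next
  case (Suc j)
  thus ?case by (cases "j = 0") auto
qed

lemma norm_phi:
  assumes a: "cmod a < 1" and z: "cmod z = 1"
  shows "cmod (phi a z) = 1"
proof -
  have zz: "z * cnj z = 1" using complex_norm_square[of z] z by simp
  have "1 - cnj a * z = z * (cnj z - cnj a)" using zz by (simp add: algebra_simps)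
  hence "cmod (1 - cnj a * z) = cmod (cnj (z - a))" using z by (simp add: norm_mult)
  also have "\<dots> = cmod (a - z)" by (metis complex_mod_cnj norm_minus_commute)
  finally have e: "cmod (1 - cnj a * z) = cmod (a - z)" .
  have "cmod (1 - cnj a * z) \<noteq> 0" using mobius_nz[OF a z] by simp
  thus ?thesis unfolding phi_def norm_divide e by simp
qed

lemma phi_phi:
  assumes a: "cmod a < 1" and z: "cmod z = 1"
  shows "phi a (phi a z) = z"
proof -
  define D where "D = 1 - cnj a * z"
  have D: "D \<noteq> 0" unfolding D_def by (rule mobius_nz[OF a z])
  define w where "w = phi a z"
  have wD: "w = (a - z) / D" unfolding w_def phi_def D_def ..
  have k: "1 - a * cnj a \<noteq> 0"
  proof
    assume "1 - a * cnj a = 0"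
    hence "(complex_of_real (cmod a))^2 = 1" using complex_norm_square[of a] by simp
    hence "cmod a ^ 2 = 1" by (metis of_real_eq_1_iff of_real_power)
    moreover have "cmod a ^ 2 < 1 ^ 2" by (rule power_strict_mono) (use a in auto)
    ultimately show False by simp
  qed
  have e1: "a - w = z * (1 - a * cnj a) / D" unfolding wD using D
    by (simp add: field_simps D_def; (simp add: algebra_simps)?)
  have e2: "1 - cnj a * w = (1 - a * cnj a) / D" unfolding wD using D
    by (simp add: field_simps D_def; (simp add: algebra_simps)?)
  have "phi a w = (a - w) / (1 - cnj a * w)" unfolding phi_def ..
  also have "\<dots> = z" unfolding e1 e2 using D k by simp
  finally show ?thesis unfolding w_def .
qed

lemma phi_1:
  assumes a: "cmod a < 1"
  shows "phi a 1 \<noteq> 1"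
proof
  assume "phi a 1 = 1"
  moreover have "1 - cnj a \<noteq> 0" using mobius_nz[OF a, of 1] by simp
  ultimately have "a - 1 = 1 - cnj a" unfolding phi_def by (simp add: field_simps)
  hence "Re a - 1 = 1 - Re a" using arg_cong[of "a - 1" "1 - cnj a" Re] by simp
  hence "Re a = 1" by simp
  moreover have "Re a \<le> cmod a" by (rule complex_Re_le_cmod)
  ultimately show False using a by simp
qed

theorem theorem6p2:
  fixes n :: nat and B :: "complex \<Rightarrow> complex" and C :: "nat \<Rightarrow> complex \<Rightarrow> complex"
    and g :: "complex \<Rightarrow> complex"
  assumes "n \<ge> 1"
    and "blaschke (2 ^ n) B"
    and "g \<in> carrier (inv_group B)"
    and "generate (inv_group B) {g} = carrier (inv_group B)"
    and "\<forall>j\<in>{1..n}. blaschke 2 (C j)"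
    and "\<forall>z. cmod z \<le> 1 \<longrightarrow> B z = chain C n z"
  shows "(\<forall>j\<in>{1..n-1}.
            carrier (inv_group (chain C j)) \<lhd> inv_group (chain C (Suc j)) \<and>
            card (rcosets\<^bsub>inv_group (chain C (Suc j))\<^esub> carrier (inv_group (chain C j))) = 2)
      \<and> (\<forall>a. a \<in> unit_disc \<longrightarrow> (\<forall>z. cmod z \<le> 1 \<longrightarrow> C 1 z = z * ((a - z) / (1 - cnj a * z)))
            \<longrightarrow> (\<forall>z\<in>unit_circle. (g ^^ (2 ^ (n - 1))) z = phi a z))"
proof (intro conjI ballI allI impI)
  fix j assume j: "j \<in> {1..n-1}"
  hence j1: "1 \<le> j" "j \<le> n" "Suc j \<le> n" using assms(1) by auto
  obtain \<theta>j where Lj: "lift_ok (2^j) (chain C j) \<theta>j" using lift_chain[OF assms(5), of j] j1 by auto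
  obtain \<theta>s where Ls: "lift_ok (2^Suc j) (chain C (Suc j)) \<theta>s" using lift_chain[OF assms(5), of "Suc j"] j1 by auto
  interpret Lj: liftloc "2^j" "chain C j" \<theta>j by unfold_locales (rule Lj)
  interpret Ls: liftloc "2^Suc j" "chain C (Suc j)" \<theta>s by unfold_locales (rule Ls)
  interpret G: comm_group "inv_group (chain C (Suc j))" by (rule Ls.grp)
  define H where "H = carrier (inv_group (chain C j))"
  have H: "H = invariants (chain C j)" unfolding H_def inv_group_def by simp
  have sub: "H \<subseteq> carrier (inv_group (chain C (Suc j)))"
    unfolding H inv_group_def invariants_def by auto
  have sg: "subgroup H (inv_group (chain C (Suc j)))"
  proof (rule G.subgroupI[OF sub])
    show "H \<noteq> {}" unfolding H using Lj.U_in by blast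
  next
    fix x assume "x \<in> H"
    then obtain k where x: "x = Uk \<theta>j k" unfolding H Lj.inv_range by auto
    have "inv\<^bsub>inv_group (chain C (Suc j))\<^esub> x = Uk \<theta>j (-k)"
    proof (rule G.inv_equality)
      show "Uk \<theta>j (-k) \<otimes>\<^bsub>inv_group (chain C (Suc j))\<^esub> x = \<one>\<^bsub>inv_group (chain C (Suc j))\<^esub>"
        unfolding x inv_group_def by (simp add: Lj.U_add Lj.U_0)
      show "x \<in> carrier (inv_group (chain C (Suc j)))" using sub Lj.U_in x H by blast
      show "Uk \<theta>j (-k) \<in> carrier (inv_group (chain C (Suc j)))" using sub Lj.U_in H by blast
    qed
    thus "inv\<^bsub>inv_group (chain C (Suc j))\<^esub> x \<in> H" unfolding H using Lj.U_in by simp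
  next
    fix x y assume "x \<in> H" "y \<in> H"
    then obtain k m where "x = Uk \<theta>j k" "y = Uk \<theta>j m" unfolding H Lj.inv_range by auto
    thus "x \<otimes>\<^bsub>inv_group (chain C (Suc j))\<^esub> y \<in> H" unfolding H inv_group_def
      by (simp add: Lj.U_add Lj.U_in)
  qed
  show "carrier (inv_group (chain C j)) \<lhd> inv_group (chain C (Suc j))"
    using G.subgroup_imp_normal[OF sg] unfolding H_def .
  have "card (rcosets\<^bsub>inv_group (chain C (Suc j))\<^esub> H) * card H = Coset.order (inv_group (chain C (Suc j)))"
    by (rule G.lagrange[OF sg])
  moreover have "card H = 2^j" unfolding H by (rule Lj.card_inv)
  moreover have "Coset.order (inv_group (chain C (Suc j))) = 2^Suc j"
    unfolding Coset.order_def using Ls.card_inv by (simp add: inv_group_def)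
  ultimately show "card (rcosets\<^bsub>inv_group (chain C (Suc j))\<^esub> carrier (inv_group (chain C j))) = 2"
    unfolding H_def by simp
next
  fix a z assume a: "a \<in> unit_disc"
    and C1: "\<forall>z. cmod z \<le> 1 \<longrightarrow> C 1 z = z * ((a - z) / (1 - cnj a * z))"
    and z: "z \<in> unit_circle"
  have a1: "cmod a < 1" using a unfolding unit_disc_def by simp
  obtain \<theta>n where Ln: "lift_ok (2^n) (chain C n) \<theta>n" using lift_chain[OF assms(5), of n] assms(1) by auto
  have LB: "lift_ok (2^n) B \<theta>n" by (rule lift_cong[OF Ln]) (use assms(6) in simp)
  interpret L: liftloc "2^n" B \<theta>n by unfold_locales (rule LB)
  interpret G: comm_group "inv_group B" by (rule L.grp)
  obtain k0 where g: "g = Uk \<theta>n k0" using assms(3) L.inv_range unfolding inv_group_def by auto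
  have "Uk \<theta>n 1 \<in> generate (inv_group B) {g}" unfolding assms(4) using L.U_in by (simp add: inv_group_def)
  then obtain zz :: int where "Uk \<theta>n 1 = g [^]\<^bsub>inv_group B\<^esub> zz" using G.generate_pow assms(3) by auto
  hence "Uk \<theta>n 1 = Uk \<theta>n (k0 * zz)" unfolding g L.U_int_pow .
  hence dv: "int (2^n) dvd (1 - k0 * zz)" using L.U_eq_iff by blast
  have "(2::int) dvd int (2^n)" using assms(1) by (simp add: dvd_power)
  hence two: "2 dvd (1 - k0 * zz)" using dv by (rule dvd_trans)
  have "odd k0"
  proof
    assume "even k0"
    hence "2 dvd k0 * zz" by simp
    hence "2 dvd (1 - k0 * zz) + k0 * zz" using two by (rule dvd_add[rotated])
    thus False by simp
  qed
  then obtain q where q: "k0 = 2*q + 1" using oddE by blast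
  define p where "p = (2::int)^(n-1)"
  obtain n' where n': "n = Suc n'" using assms(1) by (cases n) auto
  have p2: "int (2^n) = 2 * p" unfolding p_def n' by simp
  define \<phi> where "\<phi> z = (if z \<in> unit_circle then phi a z else z)" for z
  have phic: "\<phi> z \<in> unit_circle" if "z \<in> unit_circle" for z
    using norm_phi[OF a1] that unfolding \<phi>_def unit_circle_def by simp
  have \<phi>\<phi>: "\<phi> \<circ> \<phi> = id"
  proof
    fix z show "(\<phi> \<circ> \<phi>) z = id z"
    proof (cases "z \<in> unit_circle")
      case True
      thus ?thesis using phic[OF True] phi_phi[OF a1] unfolding \<phi>_def unit_circle_def by simp
    qed (simp add: \<phi>_def)
  qed
  have \<phi>inv: "\<phi> \<in> invariants B"
  proof -
    have "continuous_on unit_circle (\<lambda>z. (a - z) / (1 - cnj a * z))"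
      using mobius_nz[OF a1] by (intro continuous_intros) (auto simp: unit_circle_def)
    hence "continuous_on unit_circle \<phi>"
      by (rule continuous_on_cong[THEN iffD1, rotated 2]) (auto simp: \<phi>_def phi_def)
    moreover have "B (\<phi> z) = B z" if zc: "z \<in> unit_circle" for z
    proof -
      have nz: "cmod z = 1" "cmod (phi a z) = 1" using zc norm_phi[OF a1] unfolding unit_circle_def by auto
      have "C 1 (phi a z) = phi a z * phi a (phi a z)" using C1 nz by (simp add: phi_def)
      also have "\<dots> = C 1 z" using C1 nz phi_phi[OF a1] by (simp add: phi_def)
      finally have "chain C n (phi a z) = chain C n z" using chain_C1 assms(1) by blast
      thus ?thesis using assms(6) nz zc unfolding \<phi>_def by simp
    qed
    ultimately show ?thesis unfolding invariants_def using phic by (auto simp: \<phi>_def)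
  qed
  then obtain m where m: "\<phi> = Uk \<theta>n m" using L.inv_range by auto
  have "Uk \<theta>n (m + m) = Uk \<theta>n 0" using \<phi>\<phi> unfolding m L.U_add L.U_0 .
  hence "int (2^n) dvd (m + m - 0)" using L.U_eq_iff by blast
  hence "2 * p dvd 2 * m" unfolding p2 by simp
  hence pm: "p dvd m" by simp
  have "\<phi> \<noteq> id"
  proof
    assume "\<phi> = id"
    hence "\<phi> 1 = 1" by simp
    moreover have "(1::complex) \<in> unit_circle" unfolding unit_circle_def by simp
    ultimately have "phi a 1 = 1" unfolding \<phi>_def by simp
    thus False using phi_1[OF a1] by simp
  qed
  hence "\<not> 2 * p dvd m" using L.U_eq_iff[of m 0] m L.U_0 p2 by auto
  moreover obtain r where r1: "m = p * r" using pm by (rule dvdE)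
  ultimately have r: "m = p * r" "odd r"
  proof -
    assume nd: "\<not> 2 * p dvd m"
    show "odd r"
    proof
      assume "even r"
      then obtain s where "r = 2 * s" by (rule evenE)
      hence "m = (2 * p) * s" using r1 by simp
      thus False using nd by simp
    qed
  qed (rule r1)
  have "Uk \<theta>n m = Uk \<theta>n p"
  proof -
    obtain r' where "r = 2*r' + 1" using r(2) oddE by blast
    hence "m - p = 2 * p * r'" using r(1) by (simp add: algebra_simps)
    thus ?thesis using L.U_eq_iff p2 by simp
  qed
  moreover have "g ^^ (2^(n-1)) = Uk \<theta>n p"
  proof -
    have "g ^^ (2^(n-1)) = Uk \<theta>n (k0 * p)" unfolding g L.U_funpow p_def by simp
    moreover have "k0 * p - p = 2 * p * q" using q by (simp add: algebra_simps)
    ultimately show ?thesis using L.U_eq_iff p2 by simp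
  qed
  ultimately have "g ^^ (2^(n-1)) = \<phi>" using m by simp
  thus "(g ^^ (2 ^ (n - 1))) z = phi a z" using z unfolding \<phi>_def by simp
qed

end
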